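(* For every computable metric space $X$: $\overline{\mathsf{C}_X'}\equiv_{sW}(\overline{\mathsf{C}_X})'$.
   Context: A problem $f:\subseteq X\rightrightarrows Y$ between represented spaces (sets with surjective partial maps $\delta:\subseteq\mathbb{N}^\mathbb{N}\to X$) is a partial multi-valued map; $F\vdash f$ means $\delta_YF(p)\in f(\delta_X(p))$ whenever $\delta_X(p)\in\mathrm{dom}(f)$; $f\le_{sW}g$ iff there are computable $H,K$ with $HGK\vdash f$ for all $G\vdash g$; $\equiv_{sW}$ the induced equivalence. For a computable metric space $(X,d,\alpha)$ (Cauchy representation; basic balls $B_{\langle n,\langle i,k\rangle\rangle}=B(\alpha(n),\tfrac{i}{k+1})$), $\mathcal{A}_-(X)$ is the set of closed subsets represented by $p\mapsto X\setminus\bigcup_nB_{p(n)}$, and $\mathsf C_X:\subseteq\mathcal A_-(X)\rightrightarrows X$, $A\mapsto A$, defined on nonempty $A$. $\lim:\subseteq\mathbb{N}^\mathbb{N}\to\mathbb{N}^\mathbb{N}$ maps $\langle p_0,p_1,\dots\rangle$ to $\lim_np_n$; the jump $f'$ of $f$ is $f$ with input representation $\delta_X\circ\lim$. For $p\in\mathbb{N}^\mathbb{N}$, $p-1$ is the concatenation of $p(0)-1,p(1)-1,\dots$ with $0-1$ the empty word; the completion of $(X,\delta_X)$ is $\overline X=X\cup\{\bot\}$ with $\delta_{\overline X}(p)=\delta_X(p-1)$ if $p-1$ is an infinite sequence in $\mathrm{dom}(\delta_X)$ and $\bot$ otherwise; the completion $\overline f:\overline X\rightrightarrows\overline Y$ equals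 $f$ on $\mathrm{dom}(f)$ and $\overline Y$ elsewhere. *)

theory Defs
  imports "HOL-Analysis.Analysis" "HOL-Library.Nat_Bijection" "HOL-Library.Infinite_Set"
begin

datatype recf = Zr | Sc | Proj nat | Comp recf "recf list" | Prec recf recf | Mn recf

inductive rec_eval :: "recf \<Rightarrow> nat list \<Rightarrow> nat \<Rightarrow> bool" where
  zr: "rec_eval Zr xs 0"
| sc: "rec_eval Sc (x # xs) (Suc x)"
| proj: "n < length xs \<Longrightarrow> rec_eval (Proj n) xs (xs ! n)"
| comp: "list_all2 (\<lambda>g y. rec_eval g xs y) gs ys \<Longrightarrow> rec_eval f ys z \<Longrightarrow> rec_eval (Comp f gs) xs z"
| prec0: "rec_eval f xs y \<Longrightarrow> rec_eval (Prec f g) (0 # xs) y"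
| precS: "rec_eval (Prec f g) (n # xs) y \<Longrightarrow> rec_eval g (y # n # xs) z
           \<Longrightarrow> rec_eval (Prec f g) (Suc n # xs) z"
| mn: "rec_eval f (n # xs) 0 \<Longrightarrow> (\<forall>m<n. \<exists>y. 0 < y \<and> rec_eval f (m # xs) y)
           \<Longrightarrow> rec_eval (Mn f) xs n"

definition total_rec2 :: "(nat \<Rightarrow> nat \<Rightarrow> nat) \<Rightarrow> bool" where
  "total_rec2 h \<longleftrightarrow> (\<exists>f. \<forall>x y. rec_eval f [x, y] (h x y))"

definition total_rec3 :: "(nat \<Rightarrow> nat \<Rightarrow> nat \<Rightarrow> nat) \<Rightarrow> bool" where
  "total_rec3 h \<longleftrightarrow> (\<exists>f. \<forall>x y z. rec_eval f [x, y, z] (h x y z))"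

type_synonym baire = "nat \<Rightarrow> nat"

definition cpair :: "nat \<Rightarrow> nat \<Rightarrow> nat" where
  "cpair i j = triangle (i + j) + j"

definition prefix_code :: "baire \<Rightarrow> nat \<Rightarrow> nat" where
  "prefix_code p k = list_encode (map p [0..<k])"

text \<open>A partial map H on Baire space (None = undefined) is computable iff some
  oracle machine computes H(p) for every p in dom H.\<close>
definition computable_map :: "(baire \<Rightarrow> baire option) \<Rightarrow> bool" where
  "computable_map H \<longleftrightarrow> (\<exists>h. total_rec2 h \<and>
     (\<forall>p q. H p = Some q \<longrightarrow>
        (\<forall>n. (\<exists>k. 0 < h (prefix_code p k) n) \<and>
             h (prefix_code p (LEAST k. 0 < h (prefix_code p k) n)) n = Suc (q n))))"

type_synonym 'a rep = "baire \<Rightarrow> 'a option"   \<comment> \<open>partial surjection onto its range\<close>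

text \<open>A problem f :\<subseteq> X \<rightrightarrows> Y is a map to sets of values; dom f = {x. f x \<noteq> {}}.\<close>
type_synonym ('a, 'b) problem = "'a \<Rightarrow> 'b set"

definition realizes :: "'a rep \<Rightarrow> 'b rep \<Rightarrow> ('a, 'b) problem \<Rightarrow> (baire \<Rightarrow> baire option) \<Rightarrow> bool" where
  "realizes dX dY f F \<longleftrightarrow>
     (\<forall>p x. dX p = Some x \<and> f x \<noteq> {} \<longrightarrow>
        (\<exists>q y. F p = Some q \<and> dY q = Some y \<and> y \<in> f x))"

definition sW_le :: "'a rep \<Rightarrow> 'b rep \<Rightarrow> ('a, 'b) problem \<Rightarrow>
                     'c rep \<Rightarrow> 'd rep \<Rightarrow> ('c, 'd) problem \<Rightarrow> bool" where
  "sW_le dX dY f dZ dW g \<longleftrightarrow>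
     (\<exists>H K. computable_map H \<and> computable_map K \<and>
        (\<forall>G. realizes dZ dW g G \<longrightarrow>
              realizes dX dY f (\<lambda>p. Option.bind (K p) (\<lambda>r. Option.bind (G r) H))))"

definition sW_equiv :: "'a rep \<Rightarrow> 'b rep \<Rightarrow> ('a, 'b) problem \<Rightarrow>
                        'c rep \<Rightarrow> 'd rep \<Rightarrow> ('c, 'd) problem \<Rightarrow> bool" where
  "sW_equiv dX dY f dZ dW g \<longleftrightarrow> sW_le dX dY f dZ dW g \<and> sW_le dZ dW g dX dY f"

text \<open><p0,p1,...>(<i,j>) = p_i(j); lim maps it to the pointwise limit in Baire space.\<close>
definition baire_lim_rel :: "baire \<Rightarrow> baire \<Rightarrow> bool" where
  "baire_lim_rel p q \<longleftrightarrow> (\<forall>j. \<exists>N. \<forall>i\<ge>N. p (cpair i j) = q j)"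

definition jump_rep :: "'a rep \<Rightarrow> 'a rep" where
  "jump_rep d p = (if \<exists>q. baire_lim_rel p q then d (THE q. baire_lim_rel p q) else None)"

section \<open>Completion (bottom represented by None)\<close>

definition minus1 :: "baire \<Rightarrow> baire" where
  "minus1 p = (\<lambda>k. p (enumerate {n. p n \<noteq> 0} k) - 1)"

definition compl_rep :: "'a rep \<Rightarrow> 'a option rep" where
  "compl_rep d p = (if infinite {n. p n \<noteq> 0}
                    then (case d (minus1 p) of Some x \<Rightarrow> Some (Some x) | None \<Rightarrow> Some None)
                    else Some None)"

definition compl_prob :: "('a, 'b) problem \<Rightarrow> ('a option, 'b option) problem" where
  "compl_prob f xo = (case xo of Some x \<Rightarrow> (if f x \<noteq> {} then Some ` f x else UNIV)
                              | None \<Rightarrow> UNIV)"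

definition rat_code :: "nat \<Rightarrow> real" where
  "rat_code m = (let (a, r) = prod_decode m; (b, c) = prod_decode r
                 in (real a - real b) / (real c + 1))"

definition computable_metric :: "(nat \<Rightarrow> 'a::metric_space) \<Rightarrow> bool" where
  "computable_metric \<alpha> \<longleftrightarrow> closure (range \<alpha>) = UNIV \<and>
     (\<exists>h. total_rec3 h \<and> (\<forall>i j n. \<bar>rat_code (h i j n) - dist (\<alpha> i) (\<alpha> j)\<bar> \<le> (1/2) ^ n))"

definition cauchy_name :: "(nat \<Rightarrow> 'a::metric_space) \<Rightarrow> baire \<Rightarrow> 'a \<Rightarrow> bool" where
  "cauchy_name \<alpha> p x \<longleftrightarrow> (\<forall>i j. i < j \<longrightarrow> dist (\<alpha> (p i)) (\<alpha> (p j)) \<le> (1/2) ^ i)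
                           \<and> (\<lambda>n. \<alpha> (p n)) \<longlonglongrightarrow> x"

definition cauchy_rep :: "(nat \<Rightarrow> 'a::metric_space) \<Rightarrow> 'a rep" where
  "cauchy_rep \<alpha> p = (if \<exists>x. cauchy_name \<alpha> p x then Some (THE x. cauchy_name \<alpha> p x) else None)"

definition basic_ball :: "(nat \<Rightarrow> 'a::metric_space) \<Rightarrow> nat \<Rightarrow> 'a set" where
  "basic_ball \<alpha> m = (SOME B. \<exists>n i k. m = cpair n (cpair i k) \<and> B = ball (\<alpha> n) (real i / real (k + 1)))"

definition closed_rep :: "(nat \<Rightarrow> 'a::metric_space) \<Rightarrow> 'a set rep" where
  "closed_rep \<alpha> p = Some (UNIV - (\<Union>n. basic_ball \<alpha> (p n)))"

definition choice_prob :: "('a set, 'a) problem" where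
  "choice_prob A = A"

end

theory Submission
  imports Defs
begin


definition prc :: "nat \<Rightarrow> (nat list \<Rightarrow> nat) \<Rightarrow> bool" where
  "prc n f \<longleftrightarrow> (\<exists>F. \<forall>xs. length xs = n \<longrightarrow> rec_eval F xs (f xs))"

lemma prc_cong: "prc n f \<Longrightarrow> (\<And>xs. length xs = n \<Longrightarrow> f xs = g xs) \<Longrightarrow> prc n g"
  unfolding prc_def by metis

lemma prc_cong': "prc m f \<Longrightarrow> m = n \<Longrightarrow> (\<And>xs. length xs = n \<Longrightarrow> f xs = g xs) \<Longrightarrow> prc n g"
  unfolding prc_def by metis

lemma prc_proj: "i < n \<Longrightarrow> prc n (\<lambda>xs. xs ! i)"
  unfolding prc_def by (rule exI[of _ "Proj i"]) (auto intro: rec_eval.proj)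

lemma prc_zero: "prc n (\<lambda>xs. 0)"
  unfolding prc_def by (rule exI[of _ Zr]) (auto intro: rec_eval.zr)

lemma prc_comp1: "prc 1 f \<Longrightarrow> prc n a \<Longrightarrow> prc n (\<lambda>xs. f [a xs])"
  unfolding prc_def
proof (elim exE)
  fix F A assume F: "\<forall>xs. length xs = 1 \<longrightarrow> rec_eval F xs (f xs)"
    and A: "\<forall>xs. length xs = n \<longrightarrow> rec_eval A xs (a xs)"
  show "\<exists>F. \<forall>xs. length xs = n \<longrightarrow> rec_eval F xs (f [a xs])"
    by (rule exI[of _ "Comp F [A]"]) (auto intro!: rec_eval.comp[where ys="[_]"] F[rule_format] A[rule_format])
qed

lemma prc_comp2: "prc 2 f \<Longrightarrow> prc n a \<Longrightarrow> prc n b \<Longrightarrow> prc n (\<lambda>xs. f [a xs, b xs])"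
  unfolding prc_def
proof (elim exE)
  fix F A B assume F: "\<forall>xs. length xs = 2 \<longrightarrow> rec_eval F xs (f xs)"
    and A: "\<forall>xs. length xs = n \<longrightarrow> rec_eval A xs (a xs)"
    and B: "\<forall>xs. length xs = n \<longrightarrow> rec_eval B xs (b xs)"
  show "\<exists>F. \<forall>xs. length xs = n \<longrightarrow> rec_eval F xs (f [a xs, b xs])"
    by (rule exI[of _ "Comp F [A,B]"]) (auto intro!: rec_eval.comp[where ys="[_,_]"] F[rule_format] A[rule_format] B[rule_format])
qed

lemma prc_comp3: "prc 3 f \<Longrightarrow> prc n a \<Longrightarrow> prc n b \<Longrightarrow> prc n c \<Longrightarrow> prc n (\<lambda>xs. f [a xs, b xs, c xs])"
  unfolding prc_def
proof (elim exE)
  fix F A B C assume F: "\<forall>xs. length xs = 3 \<longrightarrow> rec_eval F xs (f xs)"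
    and A: "\<forall>xs. length xs = n \<longrightarrow> rec_eval A xs (a xs)"
    and B: "\<forall>xs. length xs = n \<longrightarrow> rec_eval B xs (b xs)"
    and C: "\<forall>xs. length xs = n \<longrightarrow> rec_eval C xs (c xs)"
  show "\<exists>F. \<forall>xs. length xs = n \<longrightarrow> rec_eval F xs (f [a xs, b xs, c xs])"
    by (rule exI[of _ "Comp F [A,B,C]"]) (auto intro!: rec_eval.comp[where ys="[_,_,_]"] F[rule_format] A[rule_format] B[rule_format] C[rule_format])
qed

lemma prc_comp4: "prc 4 f \<Longrightarrow> prc n a \<Longrightarrow> prc n b \<Longrightarrow> prc n c \<Longrightarrow> prc n d \<Longrightarrow> prc n (\<lambda>xs. f [a xs, b xs, c xs, d xs])"
  unfolding prc_def
proof (elim exE)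
  fix F A B C D assume F: "\<forall>xs. length xs = 4 \<longrightarrow> rec_eval F xs (f xs)"
    and A: "\<forall>xs. length xs = n \<longrightarrow> rec_eval A xs (a xs)"
    and B: "\<forall>xs. length xs = n \<longrightarrow> rec_eval B xs (b xs)"
    and C: "\<forall>xs. length xs = n \<longrightarrow> rec_eval C xs (c xs)"
    and D: "\<forall>xs. length xs = n \<longrightarrow> rec_eval D xs (d xs)"
  show "\<exists>F. \<forall>xs. length xs = n \<longrightarrow> rec_eval F xs (f [a xs, b xs, c xs, d xs])"
    by (rule exI[of _ "Comp F [A,B,C,D]"]) (auto intro!: rec_eval.comp[where ys="[_,_,_,_]"] F[rule_format] A[rule_format] B[rule_format] C[rule_format] D[rule_format])
qed

lemma prc_suc: "prc n a \<Longrightarrow> prc n (\<lambda>xs. Suc (a xs))"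
proof -
  have "prc 1 (\<lambda>xs. Suc (xs ! 0))"
    unfolding prc_def by (rule exI[of _ Sc]) (auto simp: length_Suc_conv intro: rec_eval.sc)
  then show "prc n a \<Longrightarrow> ?thesis" by (drule prc_comp1) auto
qed

lemma prc_const: "prc n (\<lambda>xs. c)"
  by (induction c) (auto intro: prc_zero prc_suc)

primrec prec_fun :: "(nat list \<Rightarrow> nat) \<Rightarrow> (nat list \<Rightarrow> nat) \<Rightarrow> nat \<Rightarrow> nat list \<Rightarrow> nat" where
  "prec_fun f g 0 xs = f xs"
| "prec_fun f g (Suc m) xs = g (prec_fun f g m xs # m # xs)"

lemma prc_prec: "prc n f \<Longrightarrow> prc (Suc (Suc n)) g \<Longrightarrow> prc (Suc n) (\<lambda>xs. prec_fun f g (hd xs) (tl xs))"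
  unfolding prc_def
proof (elim exE)
  fix F G assume F: "\<forall>xs. length xs = n \<longrightarrow> rec_eval F xs (f xs)"
    and G: "\<forall>xs. length xs = Suc (Suc n) \<longrightarrow> rec_eval G xs (g xs)"
  have "length xs = n \<Longrightarrow> rec_eval (Prec F G) (m # xs) (prec_fun f g m xs)" for m xs
    proof (induction m)
      case 0 then show ?case by (auto intro: rec_eval.prec0 F[rule_format])
    next
      case (Suc m)
      have "rec_eval G (prec_fun f g m xs # m # xs) (g (prec_fun f g m xs # m # xs))"
        using Suc.prems G by simp
      then show ?case using Suc by (auto intro: rec_eval.precS)
    qed
  then show "\<exists>F. \<forall>xs. length xs = Suc n \<longrightarrow> rec_eval F xs (prec_fun f g (hd xs) (tl xs))"
    by (intro exI[of _ "Prec F G"]) (auto simp: length_Suc_conv)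
qed

lemma prc_mn: "prc (Suc n) f \<Longrightarrow> (\<And>xs. length xs = n \<Longrightarrow> \<exists>m. f (m # xs) = 0)
   \<Longrightarrow> prc n (\<lambda>xs. LEAST m. f (m # xs) = 0)"
  unfolding prc_def
proof (elim exE)
  fix F assume F: "\<forall>xs. length xs = Suc n \<longrightarrow> rec_eval F xs (f xs)"
    and E: "(\<And>xs. length xs = n \<Longrightarrow> \<exists>m. f (m # xs) = 0)"
  show "\<exists>F. \<forall>xs. length xs = n \<longrightarrow> rec_eval F xs (LEAST m. f (m # xs) = 0)"
  proof (intro exI[of _ "Mn F"] allI impI)
    fix xs :: "nat list" assume l: "length xs = n"
    then obtain m where m: "f (m # xs) = 0" using E by blast
    show "rec_eval (Mn F) xs (LEAST m. f (m # xs) = 0)"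
    proof (rule rec_eval.mn)
      show "rec_eval F ((LEAST m. f (m # xs) = 0) # xs) 0"
        using F[rule_format, of "(LEAST m. f (m # xs) = 0) # xs"] l LeastI[of "\<lambda>m. f (m # xs) = 0", OF m] by simp
      show "\<forall>ma<LEAST m. f (m # xs) = 0. \<exists>y>0. rec_eval F (ma # xs) y"
        proof (intro allI impI)
        fix k assume "k < (LEAST m. f (m # xs) = 0)"
        then have "f (k # xs) \<noteq> 0" by (rule not_less_Least)
        then show "\<exists>y>0. rec_eval F (k # xs) y" using F l by (intro exI[of _ "f (k # xs)"]) simp
      qed
    qed
  qed
qed

lemma prc_prec_gen:
  assumes "prc n f" "prc (Suc (Suc n)) g"
    and "\<And>xs. length xs = n \<Longrightarrow> R 0 xs = f xs"
    and "\<And>m xs. length xs = n \<Longrightarrow> R (Suc m) xs = g (R m xs # m # xs)"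
  shows "prc (Suc n) (\<lambda>xs. R (hd xs) (tl xs))"
proof -
  have "length xs = n \<Longrightarrow> prec_fun f g m xs = R m xs" for m xs
    by (induction m) (auto simp: assms(3,4))
  then show ?thesis
    by (intro prc_cong[OF prc_prec[OF assms(1,2)]]) (auto simp: length_Suc_conv)
qed

lemma prc_op1: "prc 1 (\<lambda>xs. h (xs ! 0)) \<Longrightarrow> prc n a \<Longrightarrow> prc n (\<lambda>xs. h (a xs))"
  by (drule (1) prc_comp1) simp

lemma prc_op2: "prc 2 (\<lambda>xs. h (xs ! 0) (xs ! 1)) \<Longrightarrow> prc n a \<Longrightarrow> prc n b \<Longrightarrow> prc n (\<lambda>xs. h (a xs) (b xs))"
  by (drule (2) prc_comp2) simp

lemma prc_op3: "prc 3 (\<lambda>xs. h (xs ! 0) (xs ! 1) (xs ! 2)) \<Longrightarrow> prc n a \<Longrightarrow> prc n b \<Longrightarrow> prc n c \<Longrightarrow> prc n (\<lambda>xs. h (a xs) (b xs) (c xs))"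
  by (drule (3) prc_comp3) simp

lemma prc_op4: "prc 4 (\<lambda>xs. h (xs ! 0) (xs ! 1) (xs ! 2) (xs ! 3)) \<Longrightarrow> prc n a \<Longrightarrow> prc n b \<Longrightarrow> prc n c \<Longrightarrow> prc n d \<Longrightarrow> prc n (\<lambda>xs. h (a xs) (b xs) (c xs) (d xs))"
  by (drule (4) prc_comp4) simp

lemma len1: "length xs = Suc 0 \<longleftrightarrow> (\<exists>a. xs = [a])" by (auto simp: length_Suc_conv)
lemma len2: "length xs = 2 \<longleftrightarrow> (\<exists>a b. xs = [a,b])" by (auto simp: length_Suc_conv numeral_2_eq_2)
lemma len3: "length xs = 3 \<longleftrightarrow> (\<exists>a b c. xs = [a,b,c])" by (auto simp: length_Suc_conv numeral_3_eq_3)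

lemma prc2_add: "prc 2 (\<lambda>xs. xs ! 0 + xs ! 1)"
proof -
  have "prc (Suc 1) (\<lambda>xs. (\<lambda>m ys. m + ys ! 0) (hd xs) (tl xs))"
    by (rule prc_prec_gen[where f="\<lambda>ys. ys ! 0" and g="\<lambda>ys. Suc (ys ! 0)"])
       (auto intro: prc_proj prc_suc)
  then show ?thesis by (rule prc_cong') (auto simp: len2)
qed

lemma prc_add: "prc n a \<Longrightarrow> prc n b \<Longrightarrow> prc n (\<lambda>xs. a xs + b xs)"
  by (rule prc_op2[OF prc2_add])

lemma prc1_pred: "prc 1 (\<lambda>xs. xs ! 0 - 1)"
proof -
  have "prc (Suc 0) (\<lambda>xs. (\<lambda>m ys. m - 1) (hd xs) (tl xs))"
    by (rule prc_prec_gen[where f="\<lambda>ys. 0" and g="\<lambda>ys. ys ! 1"])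
       (auto intro: prc_proj prc_const)
  then show ?thesis by (rule prc_cong') (auto simp: len1)
qed

lemma prc2_subr: "prc 2 (\<lambda>xs. xs ! 1 - xs ! 0)"
proof -
  have "prc (Suc 1) (\<lambda>xs. (\<lambda>m ys. ys ! 0 - m) (hd xs) (tl xs))"
    by (rule prc_prec_gen[where f="\<lambda>ys. ys ! 0" and g="\<lambda>ys. ys ! 0 - 1"])
       (auto intro!: prc_proj prc_op1[OF prc1_pred, of _ "\<lambda>ys. ys ! 0", simplified])
  then show ?thesis by (rule prc_cong') (auto simp: len2)
qed

lemma prc_sub[intro]: "prc n a \<Longrightarrow> prc n b \<Longrightarrow> prc n (\<lambda>xs. a xs - b xs)"
  using prc_op2[of "\<lambda>x y. y - x", OF prc2_subr, of n b a] by simp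

lemma prc2_mult: "prc 2 (\<lambda>xs. xs ! 0 * xs ! 1)"
proof -
  have "prc (Suc 1) (\<lambda>xs. (\<lambda>m ys. m * ys ! 0) (hd xs) (tl xs))"
    by (rule prc_prec_gen[where f="\<lambda>ys. 0" and g="\<lambda>ys. ys ! 0 + ys ! 2"])
       (auto intro!: prc_add prc_proj prc_const)
  then show ?thesis by (rule prc_cong') (auto simp: len2)
qed

lemma prc_mult[intro]: "prc n a \<Longrightarrow> prc n b \<Longrightarrow> prc n (\<lambda>xs. a xs * b xs)"
  by (rule prc_op2[OF prc2_mult])

lemma prc3_ifz: "prc 3 (\<lambda>xs. if xs ! 0 = 0 then xs ! 1 else xs ! 2)"
proof -
  have "prc (Suc 2) (\<lambda>xs. (\<lambda>m ys. if m = 0 then ys ! 0 else ys ! 1) (hd xs) (tl xs))"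
    by (rule prc_prec_gen[where f="\<lambda>ys. ys ! 0" and g="\<lambda>ys. ys ! 3"])
       (auto intro: prc_proj)
  then show ?thesis by (rule prc_cong') (auto simp: len3)
qed

lemma prc_ifz: "prc n c \<Longrightarrow> prc n a \<Longrightarrow> prc n b \<Longrightarrow> prc n (\<lambda>xs. if c xs = 0 then a xs else b xs)"
  by (rule prc_op3[OF prc3_ifz])

lemma prc_if_le[intro]: "prc n c \<Longrightarrow> prc n d \<Longrightarrow> prc n a \<Longrightarrow> prc n b \<Longrightarrow> prc n (\<lambda>xs. if c xs \<le> d xs then a xs else b xs)"
  by (drule prc_ifz[OF prc_sub]) auto

lemma prc_if_less[intro]: "prc n c \<Longrightarrow> prc n d \<Longrightarrow> prc n a \<Longrightarrow> prc n b \<Longrightarrow> prc n (\<lambda>xs. if c xs < d xs then a xs else b xs)"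
proof -
  assume h: "prc n c" "prc n d" "prc n a" "prc n b"
  have "prc n (\<lambda>xs. if d xs - c xs = 0 then b xs else a xs)"
    using h by (intro prc_ifz prc_sub)
  then show ?thesis by (rule prc_cong) (auto cong: if_cong)
qed

lemma prc_if_eq[intro]: "prc n c \<Longrightarrow> prc n d \<Longrightarrow> prc n a \<Longrightarrow> prc n b \<Longrightarrow> prc n (\<lambda>xs. if c xs = d xs then a xs else b xs)"
proof -
  assume h: "prc n c" "prc n d" "prc n a" "prc n b"
  have "prc n (\<lambda>xs. if (c xs - d xs) + (d xs - c xs) = 0 then a xs else b xs)"
    using h by (intro prc_ifz prc_add prc_sub)
  then show ?thesis by (rule prc_cong) (auto cong: if_cong)
qed

lemma prc_if_ne[intro]: "prc n c \<Longrightarrow> prc n d \<Longrightarrow> prc n a \<Longrightarrow> prc n b \<Longrightarrow> prc n (\<lambda>xs. if c xs \<noteq> d xs then a xs else b xs)"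
proof -
  assume h: "prc n c" "prc n d" "prc n a" "prc n b"
  have "prc n (\<lambda>xs. if c xs = d xs then b xs else a xs)"
    using h by (intro prc_if_eq) auto
  then show ?thesis by (rule prc_cong) auto
qed

lemma prc1_triangle: "prc 1 (\<lambda>xs. triangle (xs ! 0))"
proof -
  have "prc (Suc 0) (\<lambda>xs. (\<lambda>m ys. triangle m) (hd xs) (tl xs))"
    by (rule prc_prec_gen[where f="\<lambda>ys. 0" and g="\<lambda>ys. ys ! 0 + Suc (ys ! 1)"];
        (intro prc_add prc_suc prc_proj prc_const)?; simp)
  then show ?thesis by (rule prc_cong') (auto simp: len1)
qed

lemma prc_triangle[intro]: "prc n a \<Longrightarrow> prc n (\<lambda>xs. triangle (a xs))"
  by (rule prc_op1[OF prc1_triangle])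

definition pds :: "nat \<Rightarrow> nat" where "pds m = (LEAST s. (if m < triangle (Suc s) then 0 else 1::nat) = 0)"

lemma pds_ex: "\<exists>s. (if m < triangle (Suc s) then 0 else 1::nat) = 0"
  by (rule exI[of _ m]) (simp add: triangle_def)

lemma prc1_pds: "prc 1 (\<lambda>xs. pds (xs ! 0))"
proof -
  have "prc 1 (\<lambda>xs. LEAST s. (\<lambda>ys. if ys ! 1 < triangle (Suc (ys ! 0)) then 0 else 1::nat) (s # xs) = 0)"
  proof (rule prc_mn)
    show "prc (Suc 1) (\<lambda>ys. if ys ! 1 < triangle (Suc (ys ! 0)) then 0 else 1::nat)"
      by (intro prc_if_less prc_triangle prc_suc prc_proj prc_const; simp)
  qed (use pds_ex in \<open>auto simp: len1\<close>)
  then show ?thesis by (rule prc_cong') (auto simp: len1 pds_def)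
qed

lemma pds_prop: "triangle (pds m) \<le> m \<and> m < triangle (Suc (pds m))"
proof -
  have 1: "m < triangle (Suc (pds m))" unfolding pds_def
    using LeastI_ex[OF pds_ex[of m]] by (simp split: if_splits)
  have 2: "triangle (pds m) \<le> m"
  proof (cases "pds m")
    case (Suc s)
    then have "s < pds m" by simp
    then have "(if m < triangle (Suc s) then 0 else 1::nat) \<noteq> 0"
      unfolding pds_def by (rule not_less_Least)
    then show ?thesis using Suc by (simp split: if_splits)
  qed simp
  from 1 2 show ?thesis by simp
qed

lemma prod_decode_pds: "prod_decode m = (m - triangle (pds m), pds m - (m - triangle (pds m)))"
proof -
  let ?s = "pds m" let ?a = "m - triangle (pds m)"
  have "m < triangle ?s + Suc ?s" using pds_prop[of m] by simp
  then have "?a \<le> ?s" by arith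
  then have "prod_encode (?a, ?s - ?a) = m" using pds_prop[of m] by (simp add: prod_encode_def)
  then show ?thesis by (metis prod_encode_inverse)
qed

lemma prc_pfst[intro]: "prc n a \<Longrightarrow> prc n (\<lambda>xs. fst (prod_decode (a xs)))"
proof -
  assume "prc n a"
  then have "prc n (\<lambda>xs. a xs - triangle (pds (a xs)))" by (intro prc_sub prc_triangle prc_op1[OF prc1_pds])
  then show ?thesis by (rule prc_cong) (simp add: prod_decode_pds)
qed

lemma prc_psnd[intro]: "prc n a \<Longrightarrow> prc n (\<lambda>xs. snd (prod_decode (a xs)))"
proof -
  assume "prc n a"
  then have "prc n (\<lambda>xs. pds (a xs) - (a xs - triangle (pds (a xs))))" by (intro prc_sub prc_triangle prc_op1[OF prc1_pds])
  then show ?thesis by (rule prc_cong) (simp add: prod_decode_pds)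
qed

lemma prc_penc[intro]: "prc n a \<Longrightarrow> prc n b \<Longrightarrow> prc n (\<lambda>xs. prod_encode (a xs, b xs))"
proof -
  assume "prc n a" "prc n b"
  then have "prc n (\<lambda>xs. triangle (a xs + b xs) + a xs)" by (intro prc_add prc_triangle)
  then show ?thesis by (rule prc_cong) (simp add: prod_encode_def)
qed



definition ctl :: "nat \<Rightarrow> nat" where "ctl c = (if c = 0 then 0 else snd (prod_decode (c - 1)))"
definition chd :: "nat \<Rightarrow> nat" where "chd c = fst (prod_decode (c - 1))"
definition ctln :: "nat \<Rightarrow> nat \<Rightarrow> nat" where "ctln t c = (ctl ^^ t) c"
definition nthc :: "nat \<Rightarrow> nat \<Rightarrow> nat" where "nthc c t = chd (ctln t c)"

lemma prc_ctl[intro]: "prc n a \<Longrightarrow> prc n (\<lambda>xs. ctl (a xs))"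
  unfolding ctl_def by (intro prc_if_eq prc_psnd prc_sub prc_const)

lemma prc_chd[intro]: "prc n a \<Longrightarrow> prc n (\<lambda>xs. chd (a xs))"
  unfolding chd_def by (intro prc_pfst prc_sub prc_const)

lemma prc2_ctln: "prc 2 (\<lambda>xs. ctln (xs ! 0) (xs ! 1))"
proof -
  have "prc (Suc 1) (\<lambda>xs. (\<lambda>m ys. ctln m (ys ! 0)) (hd xs) (tl xs))"
    by (rule prc_prec_gen[where f="\<lambda>ys. ys ! 0" and g="\<lambda>ys. ctl (ys ! 0)"];
        (intro prc_ctl prc_proj)?; simp add: ctln_def)
  then show ?thesis by (rule prc_cong') (auto simp: len2)
qed

lemma prc_ctln[intro]: "prc n a \<Longrightarrow> prc n b \<Longrightarrow> prc n (\<lambda>xs. ctln (a xs) (b xs))"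
  by (rule prc_op2[OF prc2_ctln])

lemma prc_nthc[intro]: "prc n a \<Longrightarrow> prc n b \<Longrightarrow> prc n (\<lambda>xs. nthc (a xs) (b xs))"
  unfolding nthc_def by (intro prc_chd prc_ctln)

lemma ctln_enc: "ctln t (list_encode l) = list_encode (drop t l)"
proof (induction t arbitrary: l)
  case 0 then show ?case by (simp add: ctln_def)
next
  case (Suc t)
  have "ctln (Suc t) (list_encode l) = ctln t (ctl (list_encode l))"
    by (simp add: ctln_def funpow_Suc_right del: funpow.simps)
  also have "ctl (list_encode l) = list_encode (drop 1 l)"
    by (cases l) (auto simp: ctl_def)
  finally show ?case using Suc by simp
qed

lemma list_encode_0: "list_encode l = 0 \<longleftrightarrow> l = []"
  by (cases l) auto

lemma pc_len: "ctln t (prefix_code p k) \<noteq> 0 \<longleftrightarrow> t < k"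
  by (simp add: prefix_code_def ctln_enc list_encode_0 not_le)

lemma pc_nth: "t < k \<Longrightarrow> nthc (prefix_code p k) t = p t"
proof -
  assume "t < k"
  then have "drop t (map p [0..<k]) = p t # map p [Suc t..<k]"
    by (simp only: drop_map drop_upt) (simp add: upt_conv_Cons)
  then show ?thesis by (simp add: nthc_def prefix_code_def ctln_enc chd_def)
qed

lemma total_rec2I: "prc 2 (\<lambda>xs. h (xs ! 0) (xs ! 1)) \<Longrightarrow> total_rec2 h"
  unfolding prc_def total_rec2_def by (auto simp: len2) (metis nth_Cons_0 nth_Cons_Suc)

lemma computable_from:
  assumes "prc 2 (\<lambda>xs. h (xs ! 0) (xs ! 1))"
    and "\<And>c n. h c n = (if ctln (B n) c \<noteq> 0 then Suc (V c n) else 0)"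
    and "\<And>p n. V (prefix_code p (Suc (B n))) n = F p n"
  shows "computable_map (\<lambda>p. Some (F p))"
  unfolding computable_map_def
proof (rule exI, intro conjI allI impI)
  show "total_rec2 h" using assms(1) by (rule total_rec2I)
  fix p q n assume "Some (F p) = Some q"
  then have q: "q = F p" by simp
  have pos: "0 < h (prefix_code p k) n \<longleftrightarrow> B n < k" for k
    using pc_len[of "B n" p k] by (simp add: assms(2))
  show "\<exists>k. 0 < h (prefix_code p k) n" using pos by blast
  have L: "(LEAST k. 0 < h (prefix_code p k) n) = Suc (B n)"
    unfolding pos by (rule Least_equality) auto
  show "h (prefix_code p (LEAST k. 0 < h (prefix_code p k) n)) n = Suc (q n)"
    unfolding L q using pc_len[of "B n" p "Suc (B n)"] by (simp add: assms(2,3))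
qed

lemma computable_id: "computable_map (\<lambda>p. Some p)"
proof -
  have "computable_map (\<lambda>p. Some ((\<lambda>p n. p n) p))"
  proof (rule computable_from[where B="\<lambda>n. n" and V="\<lambda>c n. nthc c n"])
    show "prc 2 (\<lambda>xs. (\<lambda>c n. if ctln n c \<noteq> 0 then Suc (nthc c n) else 0) (xs ! 0) (xs ! 1))"
      by (intro prc_if_ne prc_ctln prc_suc prc_nthc prc_proj prc_const; simp)
  qed (auto simp: pc_nth)
  then show ?thesis by simp
qed



definition nzl :: "(nat \<Rightarrow> nat) \<Rightarrow> nat \<Rightarrow> nat list" where
  "nzl a t = filter (\<lambda>x. x \<noteq> 0) (map a [0..<t])"
definition cntA :: "(nat \<Rightarrow> nat) \<Rightarrow> nat \<Rightarrow> nat" where "cntA a t = length (nzl a t)"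
definition selv :: "(nat \<Rightarrow> nat) \<Rightarrow> nat \<Rightarrow> nat \<Rightarrow> nat" where
  "selv a t m = (if m < cntA a t then nzl a t ! m - 1 else 0)"
definition selst :: "(nat \<Rightarrow> nat) \<Rightarrow> nat \<Rightarrow> nat \<Rightarrow> nat" where
  "selst a t m = prod_encode (cntA a t, selv a t m)"
definition sstep :: "nat \<Rightarrow> nat \<Rightarrow> nat \<Rightarrow> nat" where
  "sstep st v m = (if v = 0 then st else prod_encode (Suc (fst (prod_decode st)),
      if fst (prod_decode st) = m then v - 1 else snd (prod_decode st)))"

lemma selst_0: "selst a 0 m = 0"
  by (simp add: selst_def cntA_def selv_def nzl_def prod_encode_def)

lemma nzl_Suc: "nzl a (Suc t) = nzl a t @ (if a t = 0 then [] else [a t])"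
  by (simp add: nzl_def)

lemma selst_Suc: "selst a (Suc t) m = sstep (selst a t m) (a t) m"
proof (cases "a t = 0")
  case True then show ?thesis by (simp add: selst_def sstep_def cntA_def selv_def nzl_Suc)
next
  case False
  show ?thesis
  proof (cases "m < cntA a t")
    case True
    then show ?thesis using False
      by (simp add: selst_def sstep_def cntA_def selv_def nzl_Suc nth_append)
  next
    case F2: False
    then show ?thesis using False
      by (auto simp: selst_def sstep_def cntA_def selv_def nzl_Suc nth_append)
  qed
qed

lemma prc_sstep[intro]: "prc n a \<Longrightarrow> prc n b \<Longrightarrow> prc n c \<Longrightarrow> prc n (\<lambda>xs. sstep (a xs) (b xs) (c xs))"
  unfolding sstep_def
  by (assumption | rule prc_if_eq prc_penc prc_suc prc_pfst prc_psnd prc_sub prc_const)+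

lemmas prcI = prc_if_eq prc_if_ne prc_if_less prc_if_le prc_add prc_sub prc_mult prc_suc prc_triangle
  prc_pfst prc_psnd prc_penc prc_ctl prc_chd prc_ctln prc_nthc prc_sstep prc_const prc_proj

lemma prc_selst:
  assumes A: "prc 3 (\<lambda>ys. A (ys ! 0) (ys ! 1) (ys ! 2))"
  shows "prc 4 (\<lambda>xs. selst (\<lambda>k. A k (xs ! 2) (xs ! 3)) (xs ! 0) (xs ! 1))"
proof -
  have "prc (Suc 3) (\<lambda>xs. (\<lambda>t ys. selst (\<lambda>k. A k (ys ! 1) (ys ! 2)) t (ys ! 0)) (hd xs) (tl xs))"
  proof (rule prc_prec_gen[where f="\<lambda>ys. 0" and g="\<lambda>ys. sstep (ys ! 0) (A (ys ! 1) (ys ! 3) (ys ! 4)) (ys ! 2)"])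
    show "prc 3 (\<lambda>ys. 0)" by (rule prc_const)
    show "prc (Suc (Suc 3)) (\<lambda>ys. sstep (ys ! 0) (A (ys ! 1) (ys ! 3) (ys ! 4)) (ys ! 2))"
      by (assumption | rule prcI prc_op3[OF A] | (simp; fail))+
  qed (auto simp: selst_0 selst_Suc)
  then show ?thesis
    by (rule prc_cong') (auto simp: length_Suc_conv numeral_eq_Suc)
qed

lemma prc_selst_op:
  assumes A: "prc 3 (\<lambda>ys. A (ys ! 0) (ys ! 1) (ys ! 2))"
  shows "prc n a \<Longrightarrow> prc n b \<Longrightarrow> prc n c \<Longrightarrow> prc n d \<Longrightarrow>
         prc n (\<lambda>xs. selst (\<lambda>k. A k (c xs) (d xs)) (a xs) (b xs))"
  using prc_comp4[OF prc_selst[OF A], of n a b c d] by simp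

lemma nzl_cong: "(\<And>n. n < t \<Longrightarrow> a n = b n) \<Longrightarrow> nzl a t = nzl b t"
  unfolding nzl_def by (intro arg_cong[where f="filter _"] map_cong) auto

lemma selst_cong: "(\<And>n. n < t \<Longrightarrow> a n = b n) \<Longrightarrow> selst a t m = selst b t m"
  unfolding selst_def selv_def cntA_def by (drule nzl_cong) simp

lemma cpair_pe: "cpair i j = prod_encode (j, i)"
  by (simp add: cpair_def prod_encode_def add.commute)

lemma pd_cpair: "prod_decode (cpair i j) = (j, i)"
  by (simp add: cpair_pe)

definition kp2 :: "baire \<Rightarrow> baire" where
  "kp2 p N = Suc (selv (\<lambda>n. p (cpair (snd (prod_decode N)) n)) (Suc (snd (prod_decode N))) (fst (prod_decode N)))"

lemma computable_kp2: "computable_map (\<lambda>p. Some (kp2 p))"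
proof (rule computable_from[where B="\<lambda>N. cpair (snd (prod_decode N)) (snd (prod_decode N))"
    and V="\<lambda>c N. Suc (snd (prod_decode (selst (\<lambda>k. (\<lambda>k c s. nthc c (prod_encode (k, s))) k c (snd (prod_decode N)))
              (Suc (snd (prod_decode N))) (fst (prod_decode N)))))"])
  have A: "prc 3 (\<lambda>ys. (\<lambda>k c s. nthc c (prod_encode (k, s))) (ys ! 0) (ys ! 1) (ys ! 2))"
    by (simp, (assumption | rule prcI | (simp; fail))+)
  show "prc 2 (\<lambda>xs. (\<lambda>c N. if ctln (cpair (snd (prod_decode N)) (snd (prod_decode N))) c \<noteq> 0
      then Suc (Suc (snd (prod_decode (selst (\<lambda>k. (\<lambda>k c s. nthc c (prod_encode (k, s))) k c (snd (prod_decode N)))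
              (Suc (snd (prod_decode N))) (fst (prod_decode N)))))) else 0) (xs ! 0) (xs ! 1))"
    unfolding cpair_pe
    by (assumption | rule prcI prc_selst_op[OF A] | (simp; fail))+
next
  fix p N
  let ?s = "snd (prod_decode N)" and ?j = "fst (prod_decode N)"
  have "selst (\<lambda>k. nthc (prefix_code p (Suc (cpair ?s ?s))) (prod_encode (k, ?s))) (Suc ?s) ?j
      = selst (\<lambda>n. p (cpair ?s n)) (Suc ?s) ?j"
  proof (rule selst_cong)
    fix n assume "n < Suc ?s"
    then have "triangle (?s + n) \<le> triangle (?s + ?s)" unfolding triangle_def
      by (intro div_le_mono mult_le_mono) auto
    then have "cpair ?s n \<le> cpair ?s ?s" using \<open>n < Suc ?s\<close> unfolding cpair_def by simp
    then show "nthc (prefix_code p (Suc (cpair ?s ?s))) (prod_encode (n, ?s)) = p (cpair ?s n)"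
      by (simp add: pc_nth cpair_pe[symmetric])
  qed
  then show "Suc (snd (prod_decode (selst (\<lambda>k. (\<lambda>k c s. nthc c (prod_encode (k, s))) k
      (prefix_code p (Suc (cpair ?s ?s))) ?s) (Suc ?s) ?j))) = kp2 p N"
    by (simp add: kp2_def selst_def)
qed (rule refl)

definition kp1 :: "baire \<Rightarrow> baire" where
  "kp1 p N = (let s = snd (prod_decode N); n = fst (prod_decode N); i = snd (prod_decode n);
      j = fst (prod_decode n); t = Suc s in
      if n < cntA p t \<and> (\<forall>u<t. i \<le> u \<and> cpair u j < cntA p t \<longrightarrow> selv p t (cpair u j) = selv p t n)
      then Suc (selv p t n) else 0)"

definition cS :: "nat \<Rightarrow> nat \<Rightarrow> nat \<Rightarrow> nat" where
  "cS c T m = selst (\<lambda>k. nthc c k) T m"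

definition bind1 :: "nat \<Rightarrow> nat \<Rightarrow> nat \<Rightarrow> nat \<Rightarrow> nat" where
  "bind1 c T n u = (if snd (prod_decode n) \<le> u then
     (if prod_encode (fst (prod_decode n), u) < fst (prod_decode (cS c T 0)) then
       (if snd (prod_decode (cS c T (prod_encode (fst (prod_decode n), u)))) = snd (prod_decode (cS c T n))
        then 0 else 1) else 0) else 0)"

definition bsum :: "nat \<Rightarrow> nat \<Rightarrow> nat \<Rightarrow> nat \<Rightarrow> nat" where
  "bsum c T n k = (\<Sum>u<k. bind1 c T n u)"

lemma A1: "prc 3 (\<lambda>ys. (\<lambda>k c s. nthc c k) (ys ! 0) (ys ! 1) (ys ! 2))"
  by (simp, (assumption | rule prcI | (simp; fail))+)

lemma prc_cS[intro]: "prc n a \<Longrightarrow> prc n b \<Longrightarrow> prc n c \<Longrightarrow> prc n (\<lambda>xs. cS (a xs) (b xs) (c xs))"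
  unfolding cS_def using prc_selst_op[OF A1, of n b c a "\<lambda>_. 0"] by (simp add: prc_const)

lemma prc_bind1[intro]: "prc n a \<Longrightarrow> prc n b \<Longrightarrow> prc n c \<Longrightarrow> prc n d \<Longrightarrow> prc n (\<lambda>xs. bind1 (a xs) (b xs) (c xs) (d xs))"
  unfolding bind1_def by (assumption | rule prcI prc_cS)+

lemma prc4_bsum: "prc 4 (\<lambda>xs. bsum (xs ! 1) (xs ! 2) (xs ! 3) (xs ! 0))"
proof -
  have "prc (Suc 3) (\<lambda>xs. (\<lambda>k ys. bsum (ys ! 0) (ys ! 1) (ys ! 2) k) (hd xs) (tl xs))"
  proof (rule prc_prec_gen[where f="\<lambda>ys. 0" and g="\<lambda>ys. ys ! 0 + bind1 (ys ! 2) (ys ! 3) (ys ! 4) (ys ! 1)"])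
    show "prc 3 (\<lambda>ys. 0)" by (rule prc_const)
    show "prc (Suc (Suc 3)) (\<lambda>ys. ys ! 0 + bind1 (ys ! 2) (ys ! 3) (ys ! 4) (ys ! 1))"
      by (assumption | rule prcI prc_bind1 | (simp; fail))+
  qed (auto simp: bsum_def)
  then show ?thesis
    by (rule prc_cong') (auto simp: length_Suc_conv numeral_eq_Suc)
qed

lemma prc_bsum[intro]: "prc n a \<Longrightarrow> prc n b \<Longrightarrow> prc n c \<Longrightarrow> prc n d \<Longrightarrow> prc n (\<lambda>xs. bsum (a xs) (b xs) (c xs) (d xs))"
  using prc_comp4[OF prc4_bsum, of n d a b c] by simp

definition V1 :: "nat \<Rightarrow> nat \<Rightarrow> nat" where
  "V1 c N = (if fst (prod_decode N) < fst (prod_decode (cS c (Suc (snd (prod_decode N))) 0)) then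
     (if bsum c (Suc (snd (prod_decode N))) (fst (prod_decode N)) (Suc (snd (prod_decode N))) = 0
      then Suc (snd (prod_decode (cS c (Suc (snd (prod_decode N))) (fst (prod_decode N))))) else 0) else 0)"

lemma prc_V1: "prc n a \<Longrightarrow> prc n b \<Longrightarrow> prc n (\<lambda>xs. V1 (a xs) (b xs))"
  unfolding V1_def by (assumption | rule prcI prc_cS prc_bsum)+

lemma cS_prefix: "T \<le> k \<Longrightarrow> cS (prefix_code p k) T m = selst p T m"
  unfolding cS_def by (rule selst_cong) (simp add: pc_nth)

lemma computable_kp1: "computable_map (\<lambda>p. Some (kp1 p))"
proof (rule computable_from[where B="\<lambda>N. snd (prod_decode N)" and V="V1"])
  show "prc 2 (\<lambda>xs. (\<lambda>c N. if ctln (snd (prod_decode N)) c \<noteq> 0 then Suc (V1 c N) else 0) (xs ! 0) (xs ! 1))"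
    by (simp, (assumption | rule prcI prc_V1 | (simp; fail))+)
next
  fix p N
  let ?s = "snd (prod_decode N)" and ?n = "fst (prod_decode N)"
  let ?c = "prefix_code p (Suc ?s)"
  have cs: "cS ?c (Suc ?s) m = selst p (Suc ?s) m" for m by (rule cS_prefix) simp
  have b: "bind1 ?c (Suc ?s) ?n u = (if snd (prod_decode ?n) \<le> u \<and> cpair u (fst (prod_decode ?n)) < cntA p (Suc ?s)
        \<and> selv p (Suc ?s) (cpair u (fst (prod_decode ?n))) \<noteq> selv p (Suc ?s) ?n then 1 else 0)" for u
    unfolding bind1_def cs by (simp add: selst_def cpair_pe)
  have bs: "bsum ?c (Suc ?s) ?n (Suc ?s) = 0 \<longleftrightarrow> (\<forall>u<Suc ?s. snd (prod_decode ?n) \<le> u \<and> cpair u (fst (prod_decode ?n)) < cntA p (Suc ?s)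
       \<longrightarrow> selv p (Suc ?s) (cpair u (fst (prod_decode ?n))) = selv p (Suc ?s) ?n)"
    unfolding bsum_def b by (simp only: sum_eq_0_iff[OF finite_lessThan] Ball_def lessThan_iff) (auto split: if_splits)
  show "V1 ?c N = kp1 p N"
    unfolding V1_def kp1_def Let_def bs by (simp add: cs selst_def)
qed simp



lemma enumerate_UNIV_nat: "enumerate (UNIV::nat set) k = k"
proof (induction k)
  case 0 then show ?case by (simp add: enumerate_0)
next
  case (Suc k)
  have "enumerate (UNIV::nat set) (Suc k) = (LEAST s. s \<in> UNIV \<and> enumerate UNIV k < s)"
    by (rule enumerate_Suc'') simp
  also have "\<dots> = Suc k" using Suc by (intro Least_equality) auto
  finally show ?case .
qed

lemma minus1_allnz: "(\<And>n. p n \<noteq> 0) \<Longrightarrow> minus1 p = (\<lambda>k. p k - 1)"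
  unfolding minus1_def by (simp add: enumerate_UNIV_nat)

lemma baire_lim_unique: "baire_lim_rel p q \<Longrightarrow> baire_lim_rel p q' \<Longrightarrow> q = q'"
proof (rule ext)
  fix j assume a: "baire_lim_rel p q" "baire_lim_rel p q'"
  obtain N where N: "\<forall>i\<ge>N. p (cpair i j) = q j" using a(1) unfolding baire_lim_rel_def by blast
  obtain N' where N': "\<forall>i\<ge>N'. p (cpair i j) = q' j" using a(2) unfolding baire_lim_rel_def by blast
  show "q j = q' j" using N[rule_format, of "max N N'"] N'[rule_format, of "max N N'"] by simp
qed

lemma jump_rep_lim: "baire_lim_rel p q \<Longrightarrow> jump_rep d p = d q"
  unfolding jump_rep_def using baire_lim_unique
  by (metis (mono_tags, lifting) the_equality)

lemma nzl_prefix: "t \<le> t' \<Longrightarrow> \<exists>r. nzl a t' = nzl a t @ r"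
proof -
  assume "t \<le> t'"
  then have "[0..<t'] = [0..<t] @ [t..<t']" by (metis le0 upt_add_eq_append le_add_diff_inverse)
  then show ?thesis unfolding nzl_def by auto
qed

lemma stage_mono: "m < cntA a t \<Longrightarrow> t \<le> t' \<Longrightarrow> m < cntA a t' \<and> selv a t' m = selv a t m"
proof -
  assume m: "m < cntA a t" and t: "t \<le> t'"
  obtain r where r: "nzl a t' = nzl a t @ r" using nzl_prefix[OF t] by blast
  show ?thesis using m unfolding cntA_def selv_def r by (simp add: nth_append)
qed

lemma nzl_gap: "(\<And>x. t \<le> x \<Longrightarrow> x < t' \<Longrightarrow> a x = 0) \<Longrightarrow> t \<le> t' \<Longrightarrow> nzl a t' = nzl a t"
proof -
  assume z: "\<And>x. t \<le> x \<Longrightarrow> x < t' \<Longrightarrow> a x = 0" and t: "t \<le> t'"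
  then have "[0..<t'] = [0..<t] @ [t..<t']" by (metis le0 upt_add_eq_append le_add_diff_inverse)
  moreover have "filter (\<lambda>x. x \<noteq> 0) (map a [t..<t']) = []" using z by (auto simp: filter_empty_conv)
  ultimately show ?thesis unfolding nzl_def by simp
qed

lemma nzl_enum:
  assumes inf: "infinite {n. q n \<noteq> 0}"
  shows "nzl q (Suc (enumerate {n. q n \<noteq> 0} j)) = map (\<lambda>k. q (enumerate {n. q n \<noteq> 0} k)) [0..<Suc j]"
proof (induction j)
  let ?S = "{n. q n \<noteq> 0}"
  case 0
  have e0: "enumerate ?S 0 = (LEAST n. n \<in> ?S)" by (rule enumerate_0)
  have "nzl q (enumerate ?S 0) = nzl q 0"
    by (rule nzl_gap) (use e0 not_less_Least in auto)
  moreover have "q (enumerate ?S 0) \<noteq> 0" using enumerate_in_set[OF inf, of 0] by simp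
  ultimately show ?case by (simp add: nzl_Suc nzl_def)
next
  let ?S = "{n. q n \<noteq> 0}"
  case (Suc j)
  have eS: "enumerate ?S (Suc j) = (LEAST s. s \<in> ?S \<and> enumerate ?S j < s)"
    by (rule enumerate_Suc''[OF inf])
  have lt: "enumerate ?S j < enumerate ?S (Suc j)" by (rule enumerate_step[OF inf])
  have "nzl q (enumerate ?S (Suc j)) = nzl q (Suc (enumerate ?S j))"
  proof (rule nzl_gap)
    fix x assume "Suc (enumerate ?S j) \<le> x" "x < enumerate ?S (Suc j)"
    then show "q x = 0" using not_less_Least[of x "\<lambda>s. s \<in> ?S \<and> enumerate ?S j < s"] eS by auto
  qed (use lt in simp)
  moreover have "q (enumerate ?S (Suc j)) \<noteq> 0" using enumerate_in_set[OF inf, of "Suc j"] by simp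
  ultimately show ?case using Suc.IH by (simp add: nzl_Suc)
qed

lemma selv_enum:
  assumes inf: "infinite {n. q n \<noteq> 0}" and t: "enumerate {n. q n \<noteq> 0} j < t"
  shows "j < cntA q t \<and> selv q t j = minus1 q j"
proof -
  let ?e = "enumerate {n. q n \<noteq> 0}"
  have j: "j < cntA q (Suc (?e j)) \<and> selv q (Suc (?e j)) j = q (?e j) - 1"
    unfolding cntA_def selv_def nzl_enum[OF inf] by (simp del: upt_Suc)
  then show ?thesis using stage_mono[of j q "Suc (?e j)" t] t by (simp add: minus1_def)
qed

lemma kp2_nz: "kp2 p n \<noteq> 0" by (simp add: kp2_def)

lemma minus1_kp2: "minus1 (kp2 p) (cpair i j) = selv (\<lambda>n. p (cpair i n)) (Suc i) j"
  by (simp add: minus1_allnz[OF kp2_nz] kp2_def pd_cpair)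

lemma lim_choice: "baire_lim_rel p q \<Longrightarrow> \<exists>f. \<forall>n s. f n \<le> s \<longrightarrow> p (cpair s n) = q n"
  unfolding baire_lim_rel_def by metis

lemma dir2_lim:
  assumes lim: "baire_lim_rel p q" and inf: "infinite {n. q n \<noteq> 0}"
  shows "baire_lim_rel (minus1 (kp2 p)) (minus1 q)"
  unfolding baire_lim_rel_def
proof
  fix j
  let ?e = "enumerate {n. q n \<noteq> 0} j"
  obtain f where f: "\<And>n s. f n \<le> s \<Longrightarrow> p (cpair s n) = q n" using lim_choice[OF lim] by blast
  let ?N = "?e + (\<Sum>n\<le>?e. f n)"
  have "\<forall>i\<ge>?N. minus1 (kp2 p) (cpair i j) = minus1 q j"
  proof (intro allI impI)
    fix i assume i: "?N \<le> i"
    let ?P = "\<lambda>n. p (cpair i n)"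
    have eq: "nzl ?P (Suc ?e) = nzl q (Suc ?e)"
    proof (rule nzl_cong)
      fix n assume "n < Suc ?e"
      then have "f n \<le> (\<Sum>n\<le>?e. f n)" by (intro member_le_sum) auto
      then show "?P n = q n" using i by (intro f) simp
    qed
    have q1: "j < cntA q (Suc ?e) \<and> selv q (Suc ?e) j = minus1 q j" by (rule selv_enum[OF inf]) simp
    then have "j < cntA ?P (Suc ?e) \<and> selv ?P (Suc ?e) j = minus1 q j"
      unfolding cntA_def selv_def eq .
    then have "j < cntA ?P (Suc i) \<and> selv ?P (Suc i) j = minus1 q j"
      using stage_mono[of j ?P "Suc ?e" "Suc i"] i by simp
    then show "minus1 (kp2 p) (cpair i j) = minus1 q j" by (simp add: minus1_kp2)
  qed
  then show "\<exists>N. \<forall>i\<ge>N. minus1 (kp2 p) (cpair i j) = minus1 q j" by blast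
qed

lemma kp1_cpair: "kp1 p (cpair s n) = (if n < cntA p (Suc s) \<and>
   (\<forall>u<Suc s. snd (prod_decode n) \<le> u \<and> cpair u (fst (prod_decode n)) < cntA p (Suc s)
       \<longrightarrow> selv p (Suc s) (cpair u (fst (prod_decode n))) = selv p (Suc s) n)
   then Suc (selv p (Suc s) n) else 0)"
  by (simp add: kp1_def pd_cpair Let_def)

lemma kp1_conv: "\<exists>v N. \<forall>s\<ge>N. kp1 p (cpair s n) = v"
proof -
  let ?i = "snd (prod_decode n)" and ?j = "fst (prod_decode n)"
  show ?thesis
  proof (cases "\<exists>t0. n < cntA p t0")
    case False
    then show ?thesis by (intro exI[of _ 0]) (auto simp: kp1_cpair)
  next
    case True
    then obtain t0 where t0: "n < cntA p t0" by blast
    let ?v = "selv p t0 n"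
    have vn: "t0 \<le> t \<Longrightarrow> n < cntA p t \<and> selv p t n = ?v" for t using stage_mono[OF t0] by blast
    show ?thesis
    proof (cases "\<exists>u t1. ?i \<le> u \<and> cpair u ?j < cntA p t1 \<and> selv p t1 (cpair u ?j) \<noteq> ?v")
      case True
      then obtain u t1 where u: "?i \<le> u" "cpair u ?j < cntA p t1" "selv p t1 (cpair u ?j) \<noteq> ?v" by blast
      have "\<forall>s\<ge>t0 + t1 + u. kp1 p (cpair s n) = 0"
      proof (intro allI impI)
        fix s assume s: "t0 + t1 + u \<le> s"
        have a: "cpair u ?j < cntA p (Suc s) \<and> selv p (Suc s) (cpair u ?j) = selv p t1 (cpair u ?j)"
          using stage_mono[OF u(2), of "Suc s"] s by simp
        have b: "selv p (Suc s) n = ?v" using vn[of "Suc s"] s by simp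
        have "u < Suc s" using s by simp
        then show "kp1 p (cpair s n) = 0" using a b u unfolding kp1_cpair by auto
      qed
      then show ?thesis by blast
    next
      case False
      have "\<forall>s\<ge>t0. kp1 p (cpair s n) = Suc ?v"
      proof (intro allI impI)
        fix s assume s: "t0 \<le> s"
        have b: "n < cntA p (Suc s) \<and> selv p (Suc s) n = ?v" using vn[of "Suc s"] s by simp
        then show "kp1 p (cpair s n) = Suc ?v" using False unfolding kp1_cpair by auto
      qed
      then show ?thesis by blast
    qed
  qed
qed

definition q1 :: "baire \<Rightarrow> baire" where
  "q1 p n = (SOME v. \<exists>N. \<forall>s\<ge>N. kp1 p (cpair s n) = v)"

lemma q1_prop: "\<exists>N. \<forall>s\<ge>N. kp1 p (cpair s n) = q1 p n"
  unfolding q1_def using kp1_conv[of p n] by (rule someI_ex)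

lemma kp1_lim: "baire_lim_rel (kp1 p) (q1 p)"
  unfolding baire_lim_rel_def using q1_prop by blast

lemma q1_eqI: "\<forall>s\<ge>N. kp1 p (cpair s n) = v \<Longrightarrow> q1 p n = v"
proof -
  assume a: "\<forall>s\<ge>N. kp1 p (cpair s n) = v"
  obtain N' where "\<forall>s\<ge>N'. kp1 p (cpair s n) = q1 p n" using q1_prop by blast
  then show ?thesis using a[rule_format, of "max N N'"] by auto
qed

lemma selv_inf: "infinite {n. p n \<noteq> 0} \<Longrightarrow> m < cntA p t \<Longrightarrow> selv p t m = minus1 p m"
proof -
  assume inf: "infinite {n. p n \<noteq> 0}" and m: "m < cntA p t"
  let ?t = "max t (Suc (enumerate {n. p n \<noteq> 0} m))"
  have "selv p ?t m = selv p t m" using stage_mono[OF m, of ?t] by simp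
  moreover have "selv p ?t m = minus1 p m" using selv_enum[OF inf, of m ?t] by simp
  ultimately show ?thesis by simp
qed

lemma known_inf: "infinite {n. p n \<noteq> 0} \<Longrightarrow> Suc (enumerate {n. p n \<noteq> 0} m) \<le> t \<Longrightarrow> m < cntA p t"
  using selv_enum[of p m t] by simp

lemma cpair_pd: "cpair (snd (prod_decode n)) (fst (prod_decode n)) = n"
  by (simp add: cpair_pe)

lemma q1_inf:
  assumes inf: "infinite {n. p n \<noteq> 0}"
  shows "q1 p (cpair i j) = (if \<forall>u\<ge>i. minus1 p (cpair u j) = minus1 p (cpair i j)
                              then Suc (minus1 p (cpair i j)) else 0)"
proof -
  let ?n = "cpair i j" and ?e = "enumerate {n. p n \<noteq> 0}"
  have ij: "snd (prod_decode ?n) = i" "fst (prod_decode ?n) = j" by (simp_all add: pd_cpair)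
  show ?thesis
  proof (cases "\<forall>u\<ge>i. minus1 p (cpair u j) = minus1 p (cpair i j)")
    case True
    have "\<forall>s\<ge>Suc (?e ?n). kp1 p (cpair s ?n) = Suc (minus1 p ?n)"
    proof (intro allI impI)
      fix s assume s: "Suc (?e ?n) \<le> s"
      have k: "?n < cntA p (Suc s)" using known_inf[OF inf, of ?n "Suc s"] s by simp
      have v: "selv p (Suc s) ?n = minus1 p ?n" by (rule selv_inf[OF inf k])
      have "\<forall>u<Suc s. i \<le> u \<and> cpair u j < cntA p (Suc s) \<longrightarrow> selv p (Suc s) (cpair u j) = selv p (Suc s) ?n"
      proof (intro allI impI)
        fix u assume "u < Suc s" "i \<le> u \<and> cpair u j < cntA p (Suc s)"
        then have "selv p (Suc s) (cpair u j) = minus1 p (cpair u j)" by (intro selv_inf[OF inf]) simp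
        also have "\<dots> = minus1 p (cpair i j)" using \<open>i \<le> u \<and> cpair u j < cntA p (Suc s)\<close> by (intro True[rule_format]) simp
        finally show "selv p (Suc s) (cpair u j) = selv p (Suc s) ?n" using v by simp
      qed
      then have C: "?n < cntA p (Suc s) \<and> (\<forall>u<Suc s. i \<le> u \<and> cpair u j < cntA p (Suc s) \<longrightarrow> selv p (Suc s) (cpair u j) = selv p (Suc s) ?n)"
        using k by blast
      show "kp1 p (cpair s ?n) = Suc (minus1 p ?n)" unfolding kp1_cpair ij if_P[OF C] using v by simp
    qed
    then have "q1 p ?n = Suc (minus1 p ?n)" by (rule q1_eqI)
    then show ?thesis unfolding if_P[OF True] .
  next
    case False
    then obtain u where u: "i \<le> u" "minus1 p (cpair u j) \<noteq> minus1 p (cpair i j)" by blast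
    have "\<forall>s\<ge>Suc (?e ?n) + Suc (?e (cpair u j)) + u. kp1 p (cpair s ?n) = 0"
    proof (intro allI impI)
      fix s assume s: "Suc (?e ?n) + Suc (?e (cpair u j)) + u \<le> s"
      have k: "?n < cntA p (Suc s)" using known_inf[OF inf, of ?n "Suc s"] s by simp
      have k2: "cpair u j < cntA p (Suc s)" using known_inf[OF inf, of "cpair u j" "Suc s"] s by simp
      have us: "u < Suc s" using s by simp
      have "\<not> (\<forall>u<Suc s. i \<le> u \<and> cpair u j < cntA p (Suc s) \<longrightarrow> selv p (Suc s) (cpair u j) = selv p (Suc s) ?n)"
        using us k2 u selv_inf[OF inf k] selv_inf[OF inf k2] by metis
      then have C: "\<not> (?n < cntA p (Suc s) \<and> (\<forall>u<Suc s. i \<le> u \<and> cpair u j < cntA p (Suc s) \<longrightarrow> selv p (Suc s) (cpair u j) = selv p (Suc s) ?n))"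
        by blast
      show "kp1 p (cpair s ?n) = 0" unfolding kp1_cpair ij if_not_P[OF C] ..
    qed
    then have "q1 p ?n = 0" by (rule q1_eqI)
    then show ?thesis unfolding if_not_P[OF False] .
  qed
qed

lemma q1_nonzero:
  assumes inf: "infinite {n. p n \<noteq> 0}" and lim: "baire_lim_rel (minus1 p) L"
  shows "q1 p n \<noteq> 0 \<Longrightarrow> q1 p n = Suc (L (fst (prod_decode n)))"
    and "\<exists>N. \<forall>i\<ge>N. q1 p (cpair i j) = Suc (L j)"
proof -
  have Lj: "\<exists>N. \<forall>u\<ge>N. minus1 p (cpair u j) = L j" for j using lim unfolding baire_lim_rel_def by blast
  {
    assume nz: "q1 p n \<noteq> 0"
    let ?i = "snd (prod_decode n)" and ?j = "fst (prod_decode n)"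
    have nn: "n = cpair ?i ?j" by (simp add: cpair_pd)
    have all: "\<forall>u\<ge>?i. minus1 p (cpair u ?j) = minus1 p (cpair ?i ?j)"
    proof (rule ccontr)
      assume "\<not> ?thesis"
      then have "q1 p (cpair ?i ?j) = 0" unfolding q1_inf[OF inf, of ?i ?j] by (rule if_not_P)
      then show False using nz nn by simp
    qed
    obtain N where N: "\<forall>u\<ge>N. minus1 p (cpair u ?j) = L ?j" using Lj by blast
    have "minus1 p (cpair ?i ?j) = L ?j"
      using all[rule_format, of "max ?i N"] N[rule_format, of "max ?i N"] by simp
    moreover have "q1 p (cpair ?i ?j) = Suc (minus1 p (cpair ?i ?j))"
      unfolding q1_inf[OF inf, of ?i ?j] by (rule if_P[OF all])
    ultimately show "q1 p n = Suc (L (fst (prod_decode n)))"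
      using nn by simp
  }
  obtain N where N: "\<forall>u\<ge>N. minus1 p (cpair u j) = L j" using Lj by blast
  have "\<forall>i\<ge>N. q1 p (cpair i j) = Suc (L j)"
  proof (intro allI impI)
    fix i assume i: "N \<le> i"
    have all: "\<forall>u\<ge>i. minus1 p (cpair u j) = minus1 p (cpair i j)"
      using N i by (metis order_trans)
    show "q1 p (cpair i j) = Suc (L j)"
      unfolding q1_inf[OF inf, of i j] if_P[OF all] using N i by simp
  qed
  then show "\<exists>N. \<forall>i\<ge>N. q1 p (cpair i j) = Suc (L j)" by blast
qed



lemma compl_prob_ne: "compl_prob choice_prob z \<noteq> {}"
  by (auto simp: compl_prob_def choice_prob_def split: option.splits)

lemma realize_transfer:
  assumes T: "\<And>p x. dX p = Some x \<Longrightarrow> \<exists>z. dZ (K p) = Some z \<and> g z \<noteq> {} \<and> g z \<subseteq> f x"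
    and G: "realizes dZ dW g G"
  shows "realizes dX dW f (\<lambda>p. Option.bind (Some (K p)) (\<lambda>r. Option.bind (G r) (\<lambda>q. Some q)))"
  unfolding realizes_def
proof (intro allI impI)
  fix p x assume a: "dX p = Some x \<and> f x \<noteq> {}"
  obtain z where z: "dZ (K p) = Some z" "g z \<noteq> {}" "g z \<subseteq> f x" using T a by blast
  obtain q y where "G (K p) = Some q" "dW q = Some y" "y \<in> g z"
    using G z unfolding realizes_def by blast
  then show "\<exists>q y. Option.bind (Some (K p)) (\<lambda>r. Option.bind (G r) (\<lambda>q. Some q)) = Some q \<and> dW q = Some y \<and> y \<in> f x"
    using z by auto
qed

lemma compl_rep_ex: "\<exists>z. compl_rep d p = Some z"
  by (simp add: compl_rep_def split: option.splits)

lemma closed_rep_range: "closed_rep \<alpha> f = Some (UNIV - \<Union> (basic_ball \<alpha> ` range f))"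
  by (simp add: closed_rep_def image_image)

lemma range_minus1: "infinite {n. q n \<noteq> 0} \<Longrightarrow> range (minus1 q) = (\<lambda>n. q n - 1) ` {n. q n \<noteq> 0}"
proof -
  assume inf: "infinite {n. q n \<noteq> 0}"
  have "range (enumerate {n. q n \<noteq> 0}) = {n. q n \<noteq> 0}"
  proof
    show "range (enumerate {n. q n \<noteq> 0}) \<subseteq> {n. q n \<noteq> 0}" using enumerate_in_set[OF inf] by auto
    show "{n. q n \<noteq> 0} \<subseteq> range (enumerate {n. q n \<noteq> 0})"
    proof
      fix s assume "s \<in> {n. q n \<noteq> 0}"
      then obtain k where "enumerate {n. q n \<noteq> 0} k = s" using enumerate_Ex[OF inf] by blast
      then show "s \<in> range (enumerate {n. q n \<noteq> 0})" by (metis rangeI)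
    qed
  qed
  moreover have "range (minus1 q) = (\<lambda>n. q n - 1) ` range (enumerate {n. q n \<noteq> 0})"
    unfolding minus1_def by (simp add: image_image)
  ultimately show ?thesis by simp
qed

lemma compl_prob_None: "compl_prob choice_prob None = UNIV"
  by (simp add: compl_prob_def)

lemma cpair_ge: "i \<le> cpair i j"
proof -
  have k: "k \<le> triangle k" for k by (induction k) auto
  have "i \<le> triangle (i + j)" using k[of "i + j"] by simp
  then show ?thesis by (simp add: cpair_def)
qed

lemma dir1:
  assumes x: "compl_rep (jump_rep (closed_rep \<alpha>)) p = Some x"
  shows "\<exists>z. jump_rep (compl_rep (closed_rep \<alpha>)) (kp1 p) = Some z \<and> compl_prob choice_prob z \<noteq> {}
           \<and> compl_prob choice_prob z \<subseteq> compl_prob choice_prob x"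
proof -
  have zdef: "jump_rep (compl_rep (closed_rep \<alpha>)) (kp1 p) = compl_rep (closed_rep \<alpha>) (q1 p)"
    by (rule jump_rep_lim[OF kp1_lim])
  obtain z where z: "compl_rep (closed_rep \<alpha>) (q1 p) = Some z"
    using compl_rep_ex by blast
  show ?thesis
  proof (cases "infinite {n. p n \<noteq> 0} \<and> (\<exists>L. baire_lim_rel (minus1 p) L)")
    case True
    then obtain L where inf: "infinite {n. p n \<noteq> 0}" and L: "baire_lim_rel (minus1 p) L" by blast
    have xA: "x = Some (UNIV - \<Union> (basic_ball \<alpha> ` range L))"
      using x inf unfolding compl_rep_def jump_rep_lim[OF L] closed_rep_range by simp
    let ?S = "{n. q1 p n \<noteq> 0}"
    have inf': "infinite ?S"
      unfolding infinite_nat_iff_unbounded_le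
    proof
      fix m
      obtain N where N: "\<forall>i\<ge>N. q1 p (cpair i 0) = Suc (L 0)" using q1_nonzero(2)[OF inf L] by blast
      have "cpair (max m N) 0 \<in> ?S" using N by simp
      moreover have "m \<le> cpair (max m N) 0" using cpair_ge[of "max m N" 0] by simp
      ultimately show "\<exists>n\<ge>m. n \<in> ?S" by blast
    qed
    have rng: "range (minus1 (q1 p)) = range L"
    proof
      show "range (minus1 (q1 p)) \<subseteq> range L"
        unfolding range_minus1[OF inf']
      proof
        fix y assume "y \<in> (\<lambda>n. q1 p n - 1) ` ?S"
        then obtain n where n: "q1 p n \<noteq> 0" "y = q1 p n - 1" by blast
        then have "y = L (fst (prod_decode n))" using q1_nonzero(1)[OF inf L n(1)] by simp
        then show "y \<in> range L" by blast
      qed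
      show "range L \<subseteq> range (minus1 (q1 p))"
      proof
        fix y assume "y \<in> range L"
        then obtain j where j: "y = L j" by blast
        obtain N where N: "\<forall>i\<ge>N. q1 p (cpair i j) = Suc (L j)" using q1_nonzero(2)[OF inf L] by blast
        have "cpair N j \<in> ?S" using N by simp
        then have "y \<in> (\<lambda>n. q1 p n - 1) ` ?S" using N j by (intro rev_image_eqI[of "cpair N j"]) auto
        then show "y \<in> range (minus1 (q1 p))" unfolding range_minus1[OF inf'] .
      qed
    qed
    have "z = x" using z inf' xA unfolding compl_rep_def closed_rep_range rng by simp
    then show ?thesis using zdef z compl_prob_ne by auto
  next
    case False
    then have "x = None"
      using x unfolding compl_rep_def jump_rep_def by (auto split: if_splits option.splits)
    then show ?thesis using zdef z compl_prob_ne by (auto simp: compl_prob_None)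
  qed
qed

lemma dir2:
  assumes x: "jump_rep (compl_rep (closed_rep \<alpha>)) p = Some x"
  shows "\<exists>z. compl_rep (jump_rep (closed_rep \<alpha>)) (kp2 p) = Some z \<and> compl_prob choice_prob z \<noteq> {}
           \<and> compl_prob choice_prob z \<subseteq> compl_prob choice_prob x"
proof -
  obtain z where z: "compl_rep (jump_rep (closed_rep \<alpha>)) (kp2 p) = Some z"
    using compl_rep_ex by blast
  obtain q where lim: "baire_lim_rel p q" using x unfolding jump_rep_def by (auto split: if_splits)
  have xq: "compl_rep (closed_rep \<alpha>) q = Some x" using x jump_rep_lim[OF lim, of "compl_rep (closed_rep \<alpha>)"] by simp
  show ?thesis
  proof (cases "infinite {n. q n \<noteq> 0}")
    case True
    have inf2: "infinite {n. kp2 p n \<noteq> 0}" using kp2_nz by simp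
    have "z = x"
      using z xq True inf2 unfolding compl_rep_def jump_rep_lim[OF dir2_lim[OF lim True]] by simp
    then show ?thesis using z compl_prob_ne by auto
  next
    case False
    then have "x = None" using xq unfolding compl_rep_def by simp
    then show ?thesis using z compl_prob_ne by (auto simp: compl_prob_None)
  qed
qed

lemma le1: "sW_le (compl_rep (jump_rep (closed_rep \<alpha>))) (compl_rep (cauchy_rep \<alpha>)) (compl_prob choice_prob)
                  (jump_rep (compl_rep (closed_rep \<alpha>))) (compl_rep (cauchy_rep \<alpha>)) (compl_prob choice_prob)"
proof -
  have *: "realizes (compl_rep (jump_rep (closed_rep \<alpha>))) (compl_rep (cauchy_rep \<alpha>)) (compl_prob choice_prob)
         (\<lambda>p. Option.bind (Some (kp1 p)) (\<lambda>r. Option.bind (G r) (\<lambda>q. Some q)))"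
    if G: "realizes (jump_rep (compl_rep (closed_rep \<alpha>))) (compl_rep (cauchy_rep \<alpha>)) (compl_prob choice_prob) G" for G
    by (rule realize_transfer[where dX="compl_rep (jump_rep (closed_rep \<alpha>))" and K=kp1 and f="compl_prob choice_prob" and dZ="jump_rep (compl_rep (closed_rep \<alpha>))" and g="compl_prob choice_prob", OF dir1 G])
  show ?thesis unfolding sW_le_def
    apply (rule exI[of _ "\<lambda>q. Some q"], rule exI[of _ "\<lambda>p. Some (kp1 p)"])
    apply (rule conjI, rule computable_id)
    apply (rule conjI, rule computable_kp1)
    apply (intro allI impI)
    apply (erule *)
    done
qed

lemma le2: "sW_le (jump_rep (compl_rep (closed_rep \<alpha>))) (compl_rep (cauchy_rep \<alpha>)) (compl_prob choice_prob)
    (compl_rep (jump_rep (closed_rep \<alpha>))) (compl_rep (cauchy_rep \<alpha>)) (compl_prob choice_prob)"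
proof -
  have *: "realizes (jump_rep (compl_rep (closed_rep \<alpha>))) (compl_rep (cauchy_rep \<alpha>)) (compl_prob choice_prob)
         (\<lambda>p. Option.bind (Some (kp2 p)) (\<lambda>r. Option.bind (G r) (\<lambda>q. Some q)))"
    if G: "realizes (compl_rep (jump_rep (closed_rep \<alpha>))) (compl_rep (cauchy_rep \<alpha>)) (compl_prob choice_prob) G" for G
    by (rule realize_transfer[where dX="jump_rep (compl_rep (closed_rep \<alpha>))" and K=kp2 and f="compl_prob choice_prob" and dZ="compl_rep (jump_rep (closed_rep \<alpha>))" and g="compl_prob choice_prob", OF dir2 G])
  show ?thesis unfolding sW_le_def
    apply (rule exI[of _ "\<lambda>q. Some q"], rule exI[of _ "\<lambda>p. Some (kp2 p)"])
    apply (rule conjI, rule computable_id)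
    apply (rule conjI, rule computable_kp2)
    apply (intro allI impI)
    apply (erule *)
    done
qed

theorem proposition5p4:
  fixes \<alpha> :: "nat \<Rightarrow> 'a::metric_space"
  assumes "computable_metric \<alpha>"
  shows "sW_equiv (compl_rep (jump_rep (closed_rep \<alpha>))) (compl_rep (cauchy_rep \<alpha>)) (compl_prob choice_prob)
                  (jump_rep (compl_rep (closed_rep \<alpha>))) (compl_rep (cauchy_rep \<alpha>)) (compl_prob choice_prob)"
  unfolding sW_equiv_def using le1 le2 by blast


end
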